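(* For every integer $n\ge 1$, let $C_n$ be the family of all distinct full star-simplices $\Sigma^{\star}_{\max}(\lambda,c)$ and full top-simplices $\Sigma^{\top}_{\max}(\lambda,a)$ of $K_n=\operatorname{Cl}(G_n)$ (over all $\lambda\vdash n$, removable corners $c$, addable corners $a$), and let $N_n$ be the nerve of $C_n$. Then \[ \chi(K_n)=\chi(N_n), \] equivalently $b_n=\chi(N_n)-1$ where $b_n:=\chi(K_n)-1$.
   Context: $G_n$ is the partition graph on the set of integer partitions of $n$: two partitions are adjacent if one is obtained from the other by decreasing one part by $1$ and increasing another part (possibly a part equal to $0$) by $1$, followed by reordering, with the result different from the original. $K_n=\operatorname{Cl}(G_n)$ is its clique complex. For $\lambda=(\lambda_1\ge\lambda_2\ge\cdots)\vdash n$ (with $\lambda_k=0$ for $k$ beyond the length $\ell$), a removable corner is a row $i$ with $\lambda_i>\lambda_{i+1}$, and an addable corner is a row $j\le \ell+1$ with $j=1$ or $\lambda_{j-1}>\lambda_j$. For a removable corner $c=i$ and an addable corner $a=j$ with $i\ne j$, $\lambda(c\to a)$ is the partition obtained by decreasing $\lambda_i$ by $1$, increasing $\lambda_j$ by $1$, and reordering; the transfer is admissible if $\lambda(c\to a)\neq\lambda$ (so $\lambda(c\to a)$ is a neighbour of $\lambda$ in $G_n$). Set $A_{\max}(\lambda,c)=\{a:\lambda(c\to a)\text{ admissible}\}$, $C_{\max}(\lambda,a)=\{c:\lambda(c\to a)\text{ admissible}\}$, $\Sigma^{\star}_{\max}(\lambda,c)=\{\lambda\}\cup\{\lambda(c\to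 a):a\in A_{\max}(\lambda,c)\}$ and $\Sigma^{\top}_{\max}(\lambda,a)=\{\lambda\}\cup\{\lambda(c\to a):c\in C_{\max}(\lambda,a)\}$; these vertex sets are cliques of $G_n$, hence simplices of $K_n$, and each is regarded as the subcomplex of $K_n$ consisting of all its faces. The nerve $N_n=N(C_n)$ is the simplicial complex with vertex set $C_n$ whose simplices are the nonempty subfamilies of $C_n$ with nonempty common intersection. $\chi$ denotes Euler characteristic. *)

theory Defs
  imports Main
begin

definition partitions :: "nat \<Rightarrow> nat list set" where
  "partitions n = {xs. sorted_wrt (\<ge>) xs \<and> 0 \<notin> set xs \<and> sum_list xs = n}"

definition part :: "nat list \<Rightarrow> nat \<Rightarrow> nat" where
  "part xs i = (if 1 \<le> i \<and> i \<le> length xs then xs ! (i - 1) else 0)"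

text \<open>Decrease part i by one, increase part j by one, reorder (drop zeros).
  Intended for 1 \<le> i \<le> length, part i \<ge> 1, 1 \<le> j \<le> length + 1.\<close>
definition move :: "nat list \<Rightarrow> nat \<Rightarrow> nat \<Rightarrow> nat list" where
  "move xs i j =
     (let f = (\<lambda>k. if k = i then part xs k - 1 else if k = j then part xs k + 1 else part xs k)
      in rev (sort (filter (\<lambda>x. x \<noteq> 0) (map f [1..<length xs + 2]))))"

definition adj :: "nat list \<Rightarrow> nat list \<Rightarrow> bool" where
  "adj xs ys \<longleftrightarrow> (\<exists>i j. i \<noteq> j \<and> 1 \<le> i \<and> i \<le> length xs \<and> 1 \<le> j \<and> j \<le> length xs + 1
        \<and> ys = move xs i j \<and> ys \<noteq> xs)"

definition removable :: "nat list \<Rightarrow> nat \<Rightarrow> bool" where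
  "removable xs i \<longleftrightarrow> 1 \<le> i \<and> i \<le> length xs \<and> part xs i > part xs (i + 1)"

definition addable :: "nat list \<Rightarrow> nat \<Rightarrow> bool" where
  "addable xs j \<longleftrightarrow> 1 \<le> j \<and> j \<le> length xs + 1 \<and> (j = 1 \<or> part xs (j - 1) > part xs j)"

definition admissible :: "nat list \<Rightarrow> nat \<Rightarrow> nat \<Rightarrow> bool" where
  "admissible xs c a \<longleftrightarrow> removable xs c \<and> addable xs a \<and> c \<noteq> a \<and> move xs c a \<noteq> xs"

definition A_max :: "nat list \<Rightarrow> nat \<Rightarrow> nat set" where
  "A_max xs c = {a. admissible xs c a}"

definition C_max :: "nat list \<Rightarrow> nat \<Rightarrow> nat set" where
  "C_max xs a = {c. admissible xs c a}"

definition star_max :: "nat list \<Rightarrow> nat \<Rightarrow> nat list set" where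
  "star_max xs c = insert xs ((\<lambda>a. move xs c a) ` A_max xs c)"

definition top_max :: "nat list \<Rightarrow> nat \<Rightarrow> nat list set" where
  "top_max xs a = insert xs ((\<lambda>c. move xs c a) ` C_max xs a)"

definition K :: "nat \<Rightarrow> nat list set set" where
  "K n = {s. s \<noteq> {} \<and> finite s \<and> s \<subseteq> partitions n \<and> (\<forall>x\<in>s. \<forall>y\<in>s. x \<noteq> y \<longrightarrow> adj x y)}"

text \<open>The family C_n of full star- and top-simplices (as vertex sets; distinct = distinct sets).\<close>
definition C :: "nat \<Rightarrow> nat list set set" where
  "C n = {star_max xs c | xs c. xs \<in> partitions n \<and> removable xs c}
       \<union> {top_max xs a | xs a. xs \<in> partitions n \<and> addable xs a}"

definition nerve :: "'a set set \<Rightarrow> 'a set set set" where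
  "nerve F = {G. G \<noteq> {} \<and> finite G \<and> G \<subseteq> F \<and> \<Inter>G \<noteq> {}}"

definition euler_char :: "'a set set \<Rightarrow> int" where
  "euler_char S = (\<Sum>s\<in>S. (-1) ^ (card s - 1))"

end

theory Submission
  imports Defs "HOL-Library.Multiset"
begin


lemma alt_sum_pow:
  assumes "finite T" "T \<noteq> {}"
  shows "(\<Sum>s\<in>Pow T. (-1::int) ^ card s) = 0"
  using assms
proof (induction T rule: finite_ne_induct)
  case (singleton x)
  have "Pow {x} = {{}, {x}}" by auto
  then show ?case by simp
next
  case (insert x F)
  have fP: "finite (Pow F)" using insert by simp
  have "Pow (insert x F) = Pow F \<union> insert x ` Pow F" by (simp add: Pow_insert)
  moreover have "Pow F \<inter> insert x ` Pow F = {}" using insert by auto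
  moreover have "inj_on (insert x) (Pow F)" using insert unfolding inj_on_def by (metis PowD insert_ident subsetD)
  ultimately have "(\<Sum>s\<in>Pow (insert x F). (-1::int) ^ card s)
      = (\<Sum>s\<in>Pow F. (-1::int) ^ card s) + (\<Sum>s\<in>Pow F. (-1::int) ^ card (insert x s))"
    using fP by (simp add: sum.union_disjoint sum.reindex)
  also have "(\<Sum>s\<in>Pow F. (-1::int) ^ card (insert x s)) = (\<Sum>s\<in>Pow F. - ((-1::int) ^ card s))"
  proof (rule sum.cong)
    fix s assume "s \<in> Pow F"
    then have "finite s" "x \<notin> s" using insert finite_subset by auto
    then show "(-1::int) ^ card (insert x s) = - ((-1::int) ^ card s)" by simp
  qed simp
  finally show ?case by (simp add: sum_negf)
qed

lemma alt_sum_ne: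
  assumes "finite T"
  shows "(\<Sum>s\<in>Pow T - {{}}. (-1::int) ^ (card s - 1)) = (if T = {} then 0 else 1)"
proof (cases "T = {}")
  case True then show ?thesis by simp
next
  case False
  have fin: "finite (Pow T)" using assms by simp
  have "(\<Sum>s\<in>Pow T - {{}}. (-1::int) ^ (card s - 1)) = (\<Sum>s\<in>Pow T - {{}}. - ((-1::int) ^ card s))"
  proof (rule sum.cong)
    fix s assume "s \<in> Pow T - {{}}"
    then have "card s \<ge> 1" using assms finite_subset by (auto simp: Suc_le_eq card_gt_0_iff)
    then show "(-1::int) ^ (card s - 1) = - ((-1::int) ^ card s)" by (cases "card s") auto
  qed simp
  also have "\<dots> = - ((\<Sum>s\<in>Pow T. (-1::int) ^ card s) - 1)"
    using fin by (simp add: sum_negf sum_diff1)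
  also have "\<dots> = 1" using alt_sum_pow[OF assms False] by simp
  finally show ?thesis using False by simp
qed

definition cover_cx :: "'a set set \<Rightarrow> 'a set set" where
  "cover_cx F = {s. s \<noteq> {} \<and> finite s \<and> (\<exists>f\<in>F. s \<subseteq> f)}"

lemma euler_cover_nerve:
  assumes fF: "finite F" and fin: "\<And>f. f \<in> F \<Longrightarrow> finite f"
  shows "euler_char (cover_cx F) = euler_char (nerve F)"
proof -
  let ?K = "cover_cx F"
  let ?B = "Pow F - {{}}"
  let ?e = "\<lambda>s. (-1::int) ^ (card s - 1)"
  have fK: "finite ?K"
  proof (rule finite_subset)
    show "?K \<subseteq> \<Union>(Pow ` F)" unfolding cover_cx_def by auto
    show "finite (\<Union>(Pow ` F))" using fF fin by simp
  qed
  have fB: "finite ?B" using fF by simp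
  have "euler_char ?K = (\<Sum>s\<in>?K. ?e s * (\<Sum>G\<in>{G\<in>?B. s \<subseteq> \<Inter>G}. ?e G))"
    unfolding euler_char_def
  proof (rule sum.cong)
    fix s assume s: "s \<in> ?K"
    let ?S = "{f\<in>F. s \<subseteq> f}"
    have eq: "{G\<in>?B. s \<subseteq> \<Inter>G} = Pow ?S - {{}}" by auto
    have "?S \<noteq> {}" using s unfolding cover_cx_def by auto
    then have "(\<Sum>G\<in>{G\<in>?B. s \<subseteq> \<Inter>G}. ?e G) = 1" unfolding eq
      using alt_sum_ne[of ?S] fF by simp
    then show "?e s = ?e s * (\<Sum>G\<in>{G\<in>?B. s \<subseteq> \<Inter>G}. ?e G)" by simp
  qed simp
  also have "\<dots> = (\<Sum>s\<in>?K. \<Sum>G\<in>{G\<in>?B. s \<subseteq> \<Inter>G}. ?e s * ?e G)"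
    by (simp add: sum_distrib_left)
  also have "\<dots> = (\<Sum>G\<in>?B. \<Sum>s\<in>{s\<in>?K. s \<subseteq> \<Inter>G}. ?e s * ?e G)"
    by (rule sum.swap_restrict[OF fK fB])
  also have "\<dots> = (\<Sum>G\<in>?B. ?e G * (if \<Inter>G = {} then 0 else 1))"
  proof (rule sum.cong)
    fix G assume G: "G \<in> ?B"
    then obtain g where g: "g \<in> G" by auto
    have fI: "finite (\<Inter>G)" using g G fin by (meson DiffD1 Inf_lower PowD finite_subset subsetD)
    have eq: "{s\<in>?K. s \<subseteq> \<Inter>G} = Pow (\<Inter>G) - {{}}"
    proof
      show "{s\<in>?K. s \<subseteq> \<Inter>G} \<subseteq> Pow (\<Inter>G) - {{}}" unfolding cover_cx_def by auto
      show "Pow (\<Inter>G) - {{}} \<subseteq> {s\<in>?K. s \<subseteq> \<Inter>G}"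
        unfolding cover_cx_def using g G fI by (auto intro: finite_subset)
    qed
    show "(\<Sum>s\<in>{s\<in>?K. s \<subseteq> \<Inter>G}. ?e s * ?e G) = ?e G * (if \<Inter>G = {} then 0 else 1)"
      unfolding eq sum_distrib_right[symmetric] using alt_sum_ne[OF fI] by simp
  qed simp
  also have "\<dots> = (\<Sum>G\<in>?B. if \<Inter>G \<noteq> {} then ?e G else 0)"
    by (rule sum.cong) auto
  also have "\<dots> = (\<Sum>G\<in>{G\<in>?B. \<Inter>G \<noteq> {}}. ?e G)"
    by (rule sum.inter_filter[symmetric, OF fB])
  also have "{G\<in>?B. \<Inter>G \<noteq> {}} = nerve F"
    unfolding nerve_def using fF by (auto intro: finite_subset)
  finally show ?thesis unfolding euler_char_def .
qed



abbreviation pt :: "nat list \<Rightarrow> nat \<Rightarrow> nat" where "pt \<equiv> Defs.part"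

definition isp :: "nat list \<Rightarrow> bool" where
  "isp xs \<longleftrightarrow> sorted_wrt (\<ge>) xs \<and> 0 \<notin> set xs"

definition pvec :: "nat list \<Rightarrow> nat list \<Rightarrow> nat \<Rightarrow> nat \<Rightarrow> bool" where
  "pvec x y a c \<longleftrightarrow> a \<noteq> c \<and> (\<forall>k. pt y k + (if k = c then 1 else 0) = pt x k + (if k = a then 1 else 0))"

lemma part_0[simp]: "pt xs 0 = 0"
  by (simp add: Defs.part_def)

lemma part_Suc: "pt xs (Suc i) = (if i < length xs then xs ! i else 0)"
  by (simp add: Defs.part_def)

lemma part_pos:
  assumes "isp xs"
  shows "pt xs k > 0 \<longleftrightarrow> 1 \<le> k \<and> k \<le> length xs"
proof (cases k)
  case 0 then show ?thesis by simp
next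
  case (Suc i)
  show ?thesis
  proof (cases "i < length xs")
    case True
    then have "xs ! i \<in> set xs" by simp
    then have "xs ! i \<noteq> 0" using assms unfolding isp_def by metis
    then show ?thesis using Suc True by (simp add: part_Suc)
  qed (use Suc in \<open>auto simp: part_Suc\<close>)
qed

lemma part_mono:
  assumes "isp xs" "1 \<le> i" "i \<le> j"
  shows "pt xs j \<le> pt xs i"
proof (cases "j \<le> length xs")
  case True
  show ?thesis
  proof (cases "i = j")
    case False
    then have "xs ! (j - 1) \<le> xs ! (i - 1)"
      using assms True sorted_wrt_nth_less[of "(\<ge>)" xs "i - 1" "j - 1"] unfolding isp_def by auto
    then show ?thesis using assms True by (simp add: Defs.part_def)
  qed simp
next
  case False then show ?thesis by (simp add: Defs.part_def)
qed

lemma part_eq: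
  assumes "isp xs" "isp ys" "\<And>k. pt xs k = pt ys k"
  shows "xs = ys"
proof -
  have "length xs = length ys"
  proof (rule ccontr)
    assume ne: "length xs \<noteq> length ys"
    show False
    proof (cases "length xs < length ys")
      case True
      have "pt ys (length ys) > 0" using part_pos[OF assms(2)] True by simp
      moreover have "pt xs (length ys) = 0" using part_pos[OF assms(1), of "length ys"] True by simp
      ultimately show False using assms(3) by simp
    next
      case False
      then have "length ys < length xs" using ne by simp
      have "pt xs (length xs) > 0" using part_pos[OF assms(1)] \<open>length ys < length xs\<close> by simp
      moreover have "pt ys (length xs) = 0" using part_pos[OF assms(2), of "length xs"] \<open>length ys < length xs\<close> by simp
      ultimately show False using assms(3) by simp
    qed
  qed
  moreover have "\<And>i. i < length xs \<Longrightarrow> xs ! i = ys ! i"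
    using assms(3) \<open>length xs = length ys\<close> by (metis part_Suc)
  ultimately show ?thesis by (simp add: nth_equalityI)
qed

lemma rev_sort_desc:
  assumes "sorted_wrt (\<ge>) xs"
  shows "rev (sort xs) = xs"
proof -
  have "sorted (rev xs)" using assms by (simp add: sorted_wrt_rev)
  then have "sort xs = rev xs" by (intro properties_for_sort) simp_all
  then show ?thesis by simp
qed

lemma sort_mset_eq: "mset xs = mset ys \<Longrightarrow> sort xs = sort ys"
  by (metis sorted_list_of_multiset_mset)

lemma desc_mono:
  assumes "\<And>k. 1 \<le> k \<Longrightarrow> g (Suc k) \<le> (g k :: nat)" "1 \<le> i" "i \<le> j"
  shows "g j \<le> g i"
  using assms(3)
proof (induction j rule: dec_induct)
  case (step m)
  then show ?case using assms(1)[of m] assms(2) by simp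
qed simp

lemma mv_desc:
  assumes desc: "\<And>k. 1 \<le> k \<Longrightarrow> g (Suc k) \<le> (g k :: nat)"
    and zero: "\<And>k. k \<ge> L + 2 \<Longrightarrow> g k = 0"
  shows "isp (rev (sort (filter (\<lambda>v. v \<noteq> 0) (map g [1..<L + 2]))))"
    and "\<And>k. 1 \<le> k \<Longrightarrow> pt (rev (sort (filter (\<lambda>v. v \<noteq> 0) (map g [1..<L + 2])))) k = g k"
proof -
  define m where "m = (LEAST k. 1 \<le> k \<and> g k = 0)"
  have ex: "1 \<le> L + 2 \<and> g (L + 2) = 0" using zero by simp
  have m1: "1 \<le> m" and gm: "g m = 0" using LeastI[of "\<lambda>k. 1 \<le> k \<and> g k = 0", OF ex] unfolding m_def by auto
  have mL: "m \<le> L + 2" using Least_le[of "\<lambda>k. 1 \<le> k \<and> g k = 0", OF ex] unfolding m_def by simp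
  have below: "g k \<noteq> 0" if "1 \<le> k" "k < m" for k
    using not_less_Least[of k "\<lambda>k. 1 \<le> k \<and> g k = 0"] that unfolding m_def by auto
  have above: "g k = 0" if "m \<le> k" for k
    using desc_mono[of g m k, OF desc] m1 that gm by simp
  have split: "[1..<L+2] = [1..<m] @ [m..<L+2]" using m1 mL
    by (metis le_add_diff_inverse upt_add_eq_append)
  have filt: "filter (\<lambda>v. v \<noteq> 0) (map g [1..<L + 2]) = map g [1..<m]"
    unfolding split using below above by (auto intro!: filter_True filter_False)
  have sw: "sorted_wrt (\<ge>) (map g [1..<m])"
    unfolding sorted_wrt_map sorted_wrt_iff_nth_less
    using desc_mono[of g, OF desc] by auto
  have res: "rev (sort (filter (\<lambda>v. v \<noteq> 0) (map g [1..<L + 2]))) = map g [1..<m]"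
    unfolding filt using rev_sort_desc[OF sw] .
  show "isp (rev (sort (filter (\<lambda>v. v \<noteq> 0) (map g [1..<L + 2]))))"
    unfolding res isp_def using sw below by fastforce
  show "pt (rev (sort (filter (\<lambda>v. v \<noteq> 0) (map g [1..<L + 2])))) k = g k" if "1 \<le> k" for k
    unfolding res using that above m1 by (auto simp: Defs.part_def nth_append)
qed


lemma move_corner:
  assumes x: "isp x" and c1: "1 \<le> c" and cl: "c \<le> length x" and a1: "1 \<le> a" and ac: "a \<noteq> c"
    and clast: "\<And>k. c < k \<Longrightarrow> pt x k < pt x c"
    and afirst: "\<And>k. 1 \<le> k \<Longrightarrow> k < a \<Longrightarrow> pt x a < pt x k"
    and nb: "\<not> (a = Suc c \<and> pt x c = Suc (pt x a))"
  shows "isp (move x c a)" and "pvec x (move x c a) a c"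
proof -
  define g where "g = (\<lambda>k. if k = c then pt x k - 1 else if k = a then pt x k + 1 else pt x k)"
  have mv: "move x c a = rev (sort (filter (\<lambda>v. v \<noteq> 0) (map g [1..<length x + 2])))"
    by (simp add: move_def g_def Let_def)
  have pc: "pt x c \<ge> 1" using part_pos[OF x, of c] c1 cl by simp
  have aL: "a \<le> length x + 1"
  proof (rule ccontr)
    assume "\<not> a \<le> length x + 1"
    then have "pt x a < pt x (length x + 1)" using afirst[of "length x + 1"] by simp
    then show False using part_pos[OF x, of "length x + 1"] by simp
  qed
  have desc: "g (Suc k) \<le> g k" if k1: "1 \<le> k" for k
  proof -
    have h3: "pt x (Suc k) \<le> pt x k" using part_mono[OF x k1] by simp
    have h1: "c < Suc k \<Longrightarrow> pt x (Suc k) < pt x c" using clast by blast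
    have h2: "k < a \<Longrightarrow> pt x a < pt x k" using afirst k1 by blast
    have h6: "Suc k = c \<Longrightarrow> pt x c \<le> pt x k" using h3 by simp
    show ?thesis using h1 h2 h3 h6 pc ac nb k1 unfolding g_def by auto
  qed
  have zero: "g k = 0" if "k \<ge> length x + 2" for k
    using that cl aL part_pos[OF x, of k] unfolding g_def by auto
  have res: "pt (move x c a) k = g k" if "1 \<le> k" for k
    unfolding mv using mv_desc(2)[of g "length x", OF desc zero that] by simp
  show "isp (move x c a)"
    unfolding mv using mv_desc(1)[of g "length x", OF desc zero] by simp
  show "pvec x (move x c a) a c"
    unfolding pvec_def
  proof (intro conjI allI)
    show "a \<noteq> c" by fact
    fix k
    show "pt (move x c a) k + (if k = c then 1 else 0) = pt x k + (if k = a then 1 else 0)"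
    proof (cases "k = 0")
      case True then show ?thesis using c1 a1 by simp
    next
      case False
      then show ?thesis using res[of k] pc ac unfolding g_def by auto
    qed
  qed
qed


lemma image_mset_split2:
  assumes "finite S" "i \<in> S" "j \<in> S" "i \<noteq> j"
  shows "image_mset h (mset_set S) = add_mset (h i) (add_mset (h j) (image_mset h (mset_set (S - {i, j}))))"
proof -
  have "mset_set S = add_mset i (mset_set (S - {i}))" using assms by (simp add: mset_set.remove)
  also have "mset_set (S - {i}) = add_mset j (mset_set (S - {i} - {j}))" using assms by (simp add: mset_set.remove)
  also have "S - {i} - {j} = S - {i, j}" by auto
  finally show ?thesis by simp
qed

definition fij :: "nat list \<Rightarrow> nat \<Rightarrow> nat \<Rightarrow> nat \<Rightarrow> nat" where
  "fij x i j = (\<lambda>k. if k = i then pt x k - 1 else if k = j then pt x k + 1 else pt x k)"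

definition mvl :: "nat list \<Rightarrow> (nat \<Rightarrow> nat) \<Rightarrow> nat list" where
  "mvl x h = rev (sort (filter (\<lambda>v. v \<noteq> 0) (map h [1..<length x + 2])))"

lemma move_mvl: "move x i j = mvl x (fij x i j)"
  by (simp add: move_def mvl_def fij_def Let_def)

lemma mvl_cong:
  assumes "image_mset h1 (mset_set {1..<length x + 2}) = image_mset h2 (mset_set {1..<length x + 2})"
  shows "mvl x h1 = mvl x h2"
proof -
  have "mset (filter (\<lambda>v. v \<noteq> 0) (map h1 [1..<length x + 2])) = mset (filter (\<lambda>v. v \<noteq> 0) (map h2 [1..<length x + 2]))"
    by (simp only: mset_filter mset_map mset_upt assms)
  then show ?thesis unfolding mvl_def using sort_mset_eq by metis
qed

lemma fij_mset:
  assumes "i \<in> S" "j \<in> S" "i \<noteq> j" "finite S"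
  shows "image_mset (fij x i j) (mset_set S) + {#pt x i, pt x j#} = image_mset (pt x) (mset_set S) + {#pt x i - 1, pt x j + 1#}"
proof -
  have eq: "image_mset (fij x i j) (mset_set (S - {i, j})) = image_mset (pt x) (mset_set (S - {i, j}))"
    by (rule image_mset_cong) (use assms(4) in \<open>auto simp: fij_def\<close>)
  show ?thesis
    using image_mset_split2[OF assms(4,1,2,3), of "fij x i j"] image_mset_split2[OF assms(4,1,2,3), of "pt x"] eq assms(3)
    by (simp add: fij_def)
qed

lemma move_same:
  assumes "i \<noteq> j" "i' \<noteq> j'" "i \<in> {1..<length x + 2}" "j \<in> {1..<length x + 2}"
    "i' \<in> {1..<length x + 2}" "j' \<in> {1..<length x + 2}" "pt x i = pt x i'" "pt x j = pt x j'"
  shows "move x i j = move x i' j'"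
proof -
  let ?S = "{1..<length x + 2}"
  have "image_mset (fij x i j) (mset_set ?S) + {#pt x i, pt x j#} = image_mset (fij x i' j') (mset_set ?S) + {#pt x i, pt x j#}"
    using fij_mset[of i ?S j x] fij_mset[of i' ?S j' x] assms by simp
  then have "image_mset (fij x i j) (mset_set ?S) = image_mset (fij x i' j') (mset_set ?S)" by simp
  then show ?thesis unfolding move_mvl by (rule mvl_cong)
qed

lemma mvl_id:
  assumes "isp x"
  shows "mvl x (pt x) = x"
proof -
  have u: "[1..<length x + 1] = map Suc [0..<length x]" by (simp add: map_Suc_upt)
  have "map (pt x) [1..<length x + 1] = map (\<lambda>i. x ! i) [0..<length x]"
    unfolding u by (auto simp: part_Suc)
  then have m1: "map (pt x) [1..<length x + 1] = x" by (simp add: map_nth)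
  have u2: "[1..<length x + 2] = [1..<length x + 1] @ [length x + 1]"
    using upt_Suc_append[of 1 "length x + 1"] by simp
  have p0: "pt x (length x + 1) = 0" by (simp add: Defs.part_def)
  have m2: "map (pt x) [1..<length x + 2] = x @ [0]" unfolding u2 using m1 p0 by simp
  have z: "0 \<notin> set x" using assms unfolding isp_def by blast
  have f: "filter (\<lambda>v. v \<noteq> 0) x = x"
  proof (rule filter_True)
    show "\<forall>v\<in>set x. v \<noteq> 0" using z by metis
  qed
  have f2: "filter (\<lambda>v. v \<noteq> 0) (map (pt x) [1..<length x + 2]) = x" unfolding m2 using f by simp
  have sw: "sorted_wrt (\<ge>) x" using assms unfolding isp_def by blast
  show ?thesis unfolding mvl_def f2 using rev_sort_desc[OF sw] .
qed

lemma move_id: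
  assumes x: "isp x" and "i \<noteq> j" "i \<in> {1..<length x + 2}" "j \<in> {1..<length x + 2}" "pt x i = Suc (pt x j)"
  shows "move x i j = x"
proof -
  let ?S = "{1..<length x + 2}"
  have "image_mset (fij x i j) (mset_set ?S) + {#pt x i, pt x j#} = image_mset (pt x) (mset_set ?S) + {#pt x i, pt x j#}"
  proof -
    have m: "{#pt x i - 1, pt x j + 1#} = {#pt x i, pt x j#}" using assms(5) by (simp add: add_mset_commute)
    show ?thesis using fij_mset[of i ?S j x] assms(2,3,4) unfolding m by simp
  qed
  then have "image_mset (fij x i j) (mset_set ?S) = image_mset (pt x) (mset_set ?S)" by simp
  then have "mvl x (fij x i j) = mvl x (pt x)" by (rule mvl_cong)
  then show ?thesis unfolding move_mvl using mvl_id[OF x] by simp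
qed


lemma move_pvec:
  assumes x: "isp x" and ij: "i \<noteq> j" and i1: "1 \<le> i" and iL: "i \<le> length x"
    and j1: "1 \<le> j" and jL: "j \<le> length x + 1" and ne: "move x i j \<noteq> x"
  shows "isp (move x i j) \<and> (\<exists>a c. pvec x (move x i j) a c)"
proof -
  define p where "p = pt x i"
  define q where "q = pt x j"
  have p1: "p \<ge> 1" using part_pos[OF x, of i] i1 iL unfolding p_def by simp
  define Sc where "Sc = {k. pt x k = p}"
  have Sc_sub: "Sc \<subseteq> {1..length x}" using part_pos[OF x] p1 unfolding Sc_def by fastforce
  have fSc: "finite Sc" using Sc_sub finite_subset by blast
  have iSc: "i \<in> Sc" unfolding Sc_def p_def by simp
  define c where "c = Max Sc"
  have cSc: "c \<in> Sc" unfolding c_def using fSc iSc Max_in by blast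
  have ic: "i \<le> c" unfolding c_def using fSc iSc Max_ge by blast
  have pc: "pt x c = p" using cSc unfolding Sc_def by simp
  have c1: "1 \<le> c" and cL: "c \<le> length x" using cSc Sc_sub by auto
  have clast: "pt x k < pt x c" if "c < k" for k
  proof -
    have "pt x k \<le> pt x c" using part_mono[OF x c1] that by simp
    moreover have "k \<notin> Sc" using that Max_ge[OF fSc] unfolding c_def by fastforce
    ultimately show ?thesis unfolding Sc_def using pc by auto
  qed
  define a where "a = (LEAST k. 1 \<le> k \<and> pt x k = q)"
  have exa: "1 \<le> j \<and> pt x j = q" using j1 unfolding q_def by simp
  have a1: "1 \<le> a" and pa: "pt x a = q" using LeastI[of "\<lambda>k. 1 \<le> k \<and> pt x k = q", OF exa] unfolding a_def by auto
  have aj: "a \<le> j" using Least_le[of "\<lambda>k. 1 \<le> k \<and> pt x k = q", OF exa] unfolding a_def by simp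
  have afirst: "pt x a < pt x k" if "1 \<le> k" "k < a" for k
  proof -
    have "pt x a \<le> pt x k" using part_mono[OF x that(1)] that by simp
    moreover have "pt x k \<noteq> q" using not_less_Least[of k "\<lambda>k. 1 \<le> k \<and> pt x k = q"] that unfolding a_def by auto
    ultimately show ?thesis using pa by auto
  qed
  have ac: "a \<noteq> c"
  proof
    assume "a = c"
    then have pq: "p = q" using pa pc by simp
    have "a \<le> i" using Least_le[of "\<lambda>k. 1 \<le> k \<and> pt x k = q" i] i1 pq unfolding a_def p_def by simp
    moreover have "j \<le> c" using Max_ge[OF fSc, of j] pq unfolding c_def Sc_def q_def by simp
    ultimately show False using \<open>a = c\<close> ic aj ij by simp
  qed
  have nq: "p \<noteq> Suc q"
  proof
    assume "p = Suc q"
    then have "move x i j = x" using move_id[OF x ij] i1 iL j1 jL unfolding p_def q_def by simp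
    then show False using ne by simp
  qed
  have nb: "\<not> (a = Suc c \<and> pt x c = Suc (pt x a))" using nq pa pc by simp
  have same: "move x i j = move x c a"
    using move_same[OF ij ac[symmetric], of x] i1 iL j1 jL c1 cL a1 aj pc pa unfolding p_def q_def by simp
  show ?thesis unfolding same using move_corner[OF x c1 cL a1 ac clast afirst nb] by blast
qed

lemma pvec_0: "pvec x y a c \<Longrightarrow> 1 \<le> a \<and> 1 \<le> c"
  unfolding pvec_def by (metis One_nat_def Suc_leI add_cancel_right_right neq0_conv one_neq_zero part_0)

lemma pvec_move:
  assumes x: "isp x" and y: "isp y" and pv: "pvec x y a c"
  shows "admissible x c a \<and> y = move x c a"
proof -
  have ac: "a \<noteq> c" and eq: "\<And>k. pt y k + (if k = c then 1 else 0) = pt x k + (if k = a then 1 else 0)"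
    using pv unfolding pvec_def by auto
  have a1: "1 \<le> a" and c1: "1 \<le> c" using pvec_0[OF pv] by auto
  have ec: "pt x c = pt y c + 1" using eq[of c] ac by simp
  have ea: "pt y a = pt x a + 1" using eq[of a] ac by simp
  have cL: "c \<le> length x" using part_pos[OF x, of c] ec by simp
  have ec1: "pt x (Suc c) \<le> pt y (Suc c)" using eq[of "Suc c"] by (auto split: if_splits)
  have my: "pt y (Suc c) \<le> pt y c" using part_mono[OF y c1] by simp
  have rem: "pt x (Suc c) < pt x c" using ec ec1 my by simp
  have clast: "pt x k < pt x c" if "c < k" for k
    using part_mono[OF x, of "Suc c" k] that rem by simp
  have addp: "pt x a < pt x (a - 1)" if "a \<ge> 2"
  proof -
    have "pt y a \<le> pt y (a - 1)" using part_mono[OF y, of "a - 1" a] that by simp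
    moreover have "pt y (a - 1) \<le> pt x (a - 1)" using eq[of "a - 1"] that by (auto split: if_splits)
    ultimately show ?thesis using ea by simp
  qed
  have aL: "a \<le> length x + 1"
  proof (rule ccontr)
    assume "\<not> a \<le> length x + 1"
    then have "\<not> (1 \<le> a - 1 \<and> a - 1 \<le> length x)" by arith
    then have "\<not> 0 < pt x (a - 1)" using part_pos[OF x, of "a - 1"] by blast
    then show False using addp \<open>\<not> a \<le> length x + 1\<close> by simp
  qed
  have afirst: "pt x a < pt x k" if "1 \<le> k" "k < a" for k
    using part_mono[OF x that(1), of "a - 1"] that addp by fastforce
  have nb: "\<not> (a = Suc c \<and> pt x c = Suc (pt x a))"
  proof
    assume h: "a = Suc c \<and> pt x c = Suc (pt x a)"
    then have "pt y a \<le> pt y c" using part_mono[OF y c1, of a] by simp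
    then show False using h ea ec by simp
  qed
  have mc: "isp (move x c a)" "pvec x (move x c a) a c"
    using move_corner[OF x c1 cL a1 ac clast afirst nb] by auto
  have "move x c a = y"
  proof (rule part_eq[OF mc(1) y])
    fix k
    have "pt (move x c a) k + (if k = c then 1 else 0) = pt x k + (if k = a then 1 else 0)"
      using mc(2) unfolding pvec_def by blast
    then show "pt (move x c a) k = pt y k" using eq[of k] by simp
  qed
  moreover have "y \<noteq> x" using ea by auto
  moreover have "removable x c" unfolding removable_def using c1 cL rem by simp
  moreover have "addable x a" unfolding addable_def using a1 aL addp by (cases "a = 1") auto
  ultimately show ?thesis unfolding admissible_def using ac by auto
qed

lemma adj_iff:
  assumes x: "isp x"
  shows "adj x y \<longleftrightarrow> isp y \<and> (\<exists>a c. pvec x y a c)"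
proof
  assume "adj x y"
  then obtain i j where "i \<noteq> j" "1 \<le> i" "i \<le> length x" "1 \<le> j" "j \<le> length x + 1" "y = move x i j" "y \<noteq> x"
    unfolding adj_def by blast
  then show "isp y \<and> (\<exists>a c. pvec x y a c)" using move_pvec[OF x] by blast
next
  assume "isp y \<and> (\<exists>a c. pvec x y a c)"
  then obtain a c where y: "isp y" and pv: "pvec x y a c" by blast
  have "admissible x c a" "y = move x c a" using pvec_move[OF x y pv] by auto
  then show "adj x y" unfolding adj_def admissible_def removable_def addable_def by blast
qed

lemma pvec_sym: "pvec x y a c \<Longrightarrow> pvec y x c a"
  unfolding pvec_def by (metis (full_types))

lemma adj_sym: "isp x \<Longrightarrow> adj x y \<Longrightarrow> adj y x"
  using adj_iff pvec_sym by metis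



lemma partitions_isp: "xs \<in> partitions n \<longleftrightarrow> isp xs \<and> sum_list xs = n"
  unfolding partitions_def isp_def by auto

lemma sum_list_pt:
  assumes "length xs \<le> N"
  shows "sum_list xs = (\<Sum>k\<in>{1..N}. pt xs k)"
proof -
  have "(\<Sum>k\<in>{1..N}. pt xs k) = (\<Sum>k\<in>{Suc 0..<Suc N}. pt xs k)"
    by (simp add: atLeastLessThanSuc_atLeastAtMost)
  also have "\<dots> = (\<Sum>i\<in>{0..<N}. pt xs (Suc i))" by (rule sum.shift_bounds_Suc_ivl)
  also have "\<dots> = (\<Sum>i\<in>{0..<length xs}. pt xs (Suc i))"
    by (rule sum.mono_neutral_right) (use assms in \<open>auto simp: part_Suc\<close>)
  also have "\<dots> = (\<Sum>i\<in>{0..<length xs}. xs ! i)"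
    by (rule sum.cong) (auto simp: part_Suc)
  also have "\<dots> = sum_list xs" by (simp add: sum_list_sum_nth)
  finally show ?thesis by simp
qed

lemma pvec_sum:
  assumes x: "isp x" and y: "isp y" and pv: "pvec x y a c"
  shows "sum_list y = sum_list x"
proof -
  have adm: "admissible x c a" using pvec_move[OF x y pv] by simp
  then have a1: "1 \<le> a" "a \<le> length x + 1" and c1: "1 \<le> c" "c \<le> length x"
    unfolding admissible_def removable_def addable_def by auto
  define N where "N = length x + length y + 2"
  have eq: "\<And>k. pt y k + (if k = c then 1 else 0) = pt x k + (if k = a then 1 else 0)"
    using pv unfolding pvec_def by blast
  have "(\<Sum>k\<in>{1..N}. pt y k + (if k = c then 1 else 0)) = (\<Sum>k\<in>{1..N}. pt x k + (if k = a then 1 else 0))"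
    using eq by simp
  then have "(\<Sum>k\<in>{1..N}. pt y k) + (if c \<in> {1..N} then 1 else 0) = (\<Sum>k\<in>{1..N}. pt x k) + (if a \<in> {1..N} then 1 else 0)"
    by (simp add: sum.distrib)
  moreover have "c \<in> {1..N}" "a \<in> {1..N}" using a1 c1 unfolding N_def by auto
  ultimately have "(\<Sum>k\<in>{1..N}. pt y k) = (\<Sum>k\<in>{1..N}. pt x k)" by simp
  then show ?thesis using sum_list_pt[of x N] sum_list_pt[of y N] unfolding N_def by simp
qed

lemma adm_corner:
  assumes x: "isp x" and adm: "admissible x c a"
  shows "isp (move x c a)" "pvec x (move x c a) a c"
proof -
  have c1: "1 \<le> c" and cL: "c \<le> length x" and rem: "pt x (c + 1) < pt x c"
    and a1: "1 \<le> a" and aL: "a \<le> length x + 1" and add: "a = 1 \<or> pt x a < pt x (a - 1)"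
    and ac: "a \<noteq> c" and ne: "move x c a \<noteq> x"
    using adm unfolding admissible_def removable_def addable_def by auto
  have clast: "pt x k < pt x c" if "c < k" for k
    using part_mono[OF x, of "Suc c" k] that rem by simp
  have afirst: "pt x a < pt x k" if "1 \<le> k" "k < a" for k
  proof -
    have "a \<noteq> 1" using that by simp
    then have "pt x a < pt x (a - 1)" using add by simp
    moreover have "pt x (a - 1) \<le> pt x k" using part_mono[OF x that(1), of "a - 1"] that by simp
    ultimately show ?thesis by simp
  qed
  have nb: "\<not> (a = Suc c \<and> pt x c = Suc (pt x a))"
  proof
    assume h: "a = Suc c \<and> pt x c = Suc (pt x a)"
    have "move x c a = x" using move_id[OF x, of c a] h c1 cL ac by simp
    then show False using ne by simp
  qed
  show "isp (move x c a)" "pvec x (move x c a) a c"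
    using move_corner[OF x c1 cL a1 ac clast afirst nb] by auto
qed

lemma adm_partition:
  assumes x: "x \<in> partitions n" and adm: "admissible x c a"
  shows "move x c a \<in> partitions n" "pvec x (move x c a) a c"
proof -
  have xi: "isp x" using x partitions_isp by blast
  show pv: "pvec x (move x c a) a c" using adm_corner[OF xi adm] by simp
  have "isp (move x c a)" using adm_corner[OF xi adm] by simp
  then show "move x c a \<in> partitions n" using pvec_sum[OF xi _ pv] x partitions_isp by auto
qed

lemma pvec_star: "pvec x y1 a1 c \<Longrightarrow> pvec x y2 a2 c \<Longrightarrow> a1 \<noteq> a2 \<Longrightarrow> pvec y1 y2 a2 a1"
  unfolding pvec_def
proof (intro conjI allI)
  fix k
  assume h: "a1 \<noteq> c \<and> (\<forall>k. pt y1 k + (if k = c then 1 else 0) = pt x k + (if k = a1 then 1 else 0))"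
    "a2 \<noteq> c \<and> (\<forall>k. pt y2 k + (if k = c then 1 else 0) = pt x k + (if k = a2 then 1 else 0))"
    "a1 \<noteq> a2"
  then show "a2 \<noteq> a1" by simp
  have e1: "pt y1 k + (if k = c then 1 else 0) = pt x k + (if k = a1 then 1 else 0)"
    and e2: "pt y2 k + (if k = c then 1 else 0) = pt x k + (if k = a2 then 1 else 0)" using h by blast+
  show "pt y2 k + (if k = a1 then 1 else 0) = pt y1 k + (if k = a2 then 1 else 0)"
    using e1 e2 by (auto split: if_splits)
qed

lemma pvec_top: "pvec x y1 a c1 \<Longrightarrow> pvec x y2 a c2 \<Longrightarrow> c1 \<noteq> c2 \<Longrightarrow> pvec y1 y2 c1 c2"
  unfolding pvec_def
proof (intro conjI allI)
  fix k
  assume h: "a \<noteq> c1 \<and> (\<forall>k. pt y1 k + (if k = c1 then 1 else 0) = pt x k + (if k = a then 1 else 0))"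
    "a \<noteq> c2 \<and> (\<forall>k. pt y2 k + (if k = c2 then 1 else 0) = pt x k + (if k = a then 1 else 0))"
    "c1 \<noteq> c2"
  then show "c1 \<noteq> c2" by simp
  have e1: "pt y1 k + (if k = c1 then 1 else 0) = pt x k + (if k = a then 1 else 0)"
    and e2: "pt y2 k + (if k = c2 then 1 else 0) = pt x k + (if k = a then 1 else 0)" using h by blast+
  show "pt y2 k + (if k = c2 then 1 else 0) = pt y1 k + (if k = c1 then 1 else 0)"
    using e1 e2 by (auto split: if_splits)
qed

lemma pvec_tri:
  assumes "pvec x y1 a1 c1" "pvec x y2 a2 c2" "pvec y1 y2 a' c'"
  shows "a1 = a2 \<or> c1 = c2"
proof (rule ccontr)
  assume n: "\<not> (a1 = a2 \<or> c1 = c2)"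
  have d: "a1 \<noteq> c1" "a2 \<noteq> c2" "a' \<noteq> c'" using assms unfolding pvec_def by auto
  have e: "\<And>k. pt y1 k + (if k = c1 then 1 else 0) = pt x k + (if k = a1 then 1 else 0)"
    "\<And>k. pt y2 k + (if k = c2 then 1 else 0) = pt x k + (if k = a2 then 1 else 0)"
    "\<And>k. pt y2 k + (if k = c' then 1 else 0) = pt y1 k + (if k = a' then 1 else 0)"
    using assms unfolding pvec_def by blast+
  have "a2 = a'" "a2 \<noteq> c1"
    using e(1)[of a2] e(2)[of a2] e(3)[of a2] n d by (auto split: if_splits)
  moreover have "c1 = a'"
    using e(1)[of c1] e(2)[of c1] e(3)[of c1] n d by (auto split: if_splits)
  ultimately show False by simp
qed



lemma length_le_sum: "0 \<notin> set xs \<Longrightarrow> length xs \<le> sum_list (xs::nat list)"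
  by (induction xs) force+

lemma finite_partitions: "finite (partitions n)"
proof (rule finite_subset)
  show "partitions n \<subseteq> {xs. set xs \<subseteq> {0..n} \<and> length xs \<le> n}"
    unfolding partitions_def using length_le_sum member_le_sum_list by fastforce
  show "finite {xs. set xs \<subseteq> {0..n} \<and> length xs \<le> n}"
    by (rule finite_lists_length_le) simp
qed

lemma partition_length: "xs \<in> partitions n \<Longrightarrow> length xs \<le> n"
  unfolding partitions_def using length_le_sum by auto

lemma finite_C: "finite (C n)"
proof -
  have s1: "{star_max xs c | xs c. xs \<in> partitions n \<and> removable xs c}
      \<subseteq> (\<lambda>(xs, c). star_max xs c) ` (partitions n \<times> {..n+1})"
    using partition_length unfolding removable_def by fastforce
  have s2: "{top_max xs a | xs a. xs \<in> partitions n \<and> addable xs a}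
      \<subseteq> (\<lambda>(xs, a). top_max xs a) ` (partitions n \<times> {..n+1})"
    using partition_length unfolding addable_def by fastforce
  show ?thesis unfolding C_def
    using finite_subset[OF s1] finite_subset[OF s2] finite_partitions by blast
qed

lemma finite_C_mem: "f \<in> C n \<Longrightarrow> finite f"
proof -
  have fa: "finite (A_max xs c)" for xs c
    by (rule finite_subset[of _ "{..length xs + 1}"]) (auto simp: A_max_def admissible_def addable_def)
  have fc: "finite (C_max xs a)" for xs a
    by (rule finite_subset[of _ "{..length xs}"]) (auto simp: C_max_def admissible_def removable_def)
  assume "f \<in> C n"
  then show "finite f" unfolding C_def star_max_def top_max_def using fa fc by auto
qed

definition clique :: "nat \<Rightarrow> nat list set \<Rightarrow> bool" where
  "clique n s \<longleftrightarrow> s \<subseteq> partitions n \<and> (\<forall>x\<in>s. \<forall>y\<in>s. x \<noteq> y \<longrightarrow> adj x y)"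

lemma star_clique:
  assumes x: "x \<in> partitions n"
  shows "clique n (star_max x c)"
proof -
  have xi: "isp x" using x partitions_isp by blast
  have mem: "y \<in> partitions n" if "y \<in> star_max x c" for y
    using that x adm_partition(1)[OF x] unfolding star_max_def A_max_def by auto
  have ad: "adj y z" if yz: "y \<in> star_max x c" "z \<in> star_max x c" "y \<noteq> z" for y z
  proof -
    have yi: "isp y" "isp z" using mem that partitions_isp by blast+
    consider "y = x" | "z = x" | "y \<noteq> x \<and> z \<noteq> x" by blast
    then show ?thesis
    proof cases
      case 1
      then obtain a where "admissible x c a" "z = move x c a" using yz 1 unfolding star_max_def A_max_def by auto
      then show ?thesis using 1 adj_iff[OF xi] yi adm_partition(2)[OF x] by blast
    next
      case 2
      then obtain a where "admissible x c a" "y = move x c a" using yz unfolding star_max_def A_max_def by auto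
      then have "adj x y" using adj_iff[OF xi] yi adm_partition(2)[OF x] by blast
      then show ?thesis using 2 adj_sym[OF xi] by blast
    next
      case 3
      then obtain a1 a2 where a: "admissible x c a1" "y = move x c a1" "admissible x c a2" "z = move x c a2"
        using yz unfolding star_max_def A_max_def by auto
      then have "a1 \<noteq> a2" using yz by auto
      then have "pvec y z a2 a1" using pvec_star adm_partition(2)[OF x] a by metis
      then show ?thesis using adj_iff yi by blast
    qed
  qed
  show ?thesis unfolding clique_def using mem ad by blast
qed

lemma top_clique:
  assumes x: "x \<in> partitions n"
  shows "clique n (top_max x a)"
proof -
  have xi: "isp x" using x partitions_isp by blast
  have mem: "y \<in> partitions n" if "y \<in> top_max x a" for y
    using that x adm_partition(1)[OF x] unfolding top_max_def C_max_def by auto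
  have ad: "adj y z" if yz: "y \<in> top_max x a" "z \<in> top_max x a" "y \<noteq> z" for y z
  proof -
    have yi: "isp y" "isp z" using mem that partitions_isp by blast+
    consider "y = x" | "z = x" | "y \<noteq> x \<and> z \<noteq> x" by blast
    then show ?thesis
    proof cases
      case 1
      then obtain c where "admissible x c a" "z = move x c a" using yz 1 unfolding top_max_def C_max_def by auto
      then show ?thesis using 1 adj_iff[OF xi] yi adm_partition(2)[OF x] by blast
    next
      case 2
      then obtain c where "admissible x c a" "y = move x c a" using yz unfolding top_max_def C_max_def by auto
      then have "adj x y" using adj_iff[OF xi] yi adm_partition(2)[OF x] by blast
      then show ?thesis using 2 adj_sym[OF xi] by blast
    next
      case 3
      then obtain c1 c2 where a: "admissible x c1 a" "y = move x c1 a" "admissible x c2 a" "z = move x c2 a"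
        using yz unfolding top_max_def C_max_def by auto
      then have "c1 \<noteq> c2" using yz by auto
      then have "pvec y z c1 c2" using pvec_top adm_partition(2)[OF x] a by metis
      then show ?thesis using adj_iff yi by blast
    qed
  qed
  show ?thesis unfolding clique_def using mem ad by blast
qed

lemma C_clique: "f \<in> C n \<Longrightarrow> clique n f"
  unfolding C_def using star_clique top_clique by blast

lemma star_in_C: "x \<in> partitions n \<Longrightarrow> removable x c \<Longrightarrow> star_max x c \<in> C n"
  unfolding C_def by blast

lemma top_in_C: "x \<in> partitions n \<Longrightarrow> addable x a \<Longrightarrow> top_max x a \<in> C n"
  unfolding C_def by blast

lemma clique_covered:
  assumes n: "n \<ge> 1" and cl: "clique n s" and l: "l \<in> s"
  shows "\<exists>f\<in>C n. s \<subseteq> f"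
proof -
  have lp: "l \<in> partitions n" using cl l unfolding clique_def by blast
  have li: "isp l" using lp partitions_isp by blast
  let ?S = "s - {l}"
  have ex: "\<exists>a c. pvec l m a c" if "m \<in> ?S" for m
  proof -
    have pw: "\<forall>x\<in>s. \<forall>y\<in>s. x \<noteq> y \<longrightarrow> adj x y" using cl unfolding clique_def by blast
    have "m \<in> s" "m \<noteq> l" using that by auto
    then have "adj l m" using pw[rule_format, of l m] l by metis
    then show ?thesis by (simp add: adj_iff[OF li])
  qed
  define A where "A m = (SOME a. \<exists>c. pvec l m a c)" for m
  define Cc where "Cc m = (SOME c. pvec l m (A m) c)" for m
  have pv: "pvec l m (A m) (Cc m)" if "m \<in> ?S" for m
  proof -
    have "\<exists>c. pvec l m (A m) c" unfolding A_def using someI_ex[OF ex[OF that]] .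
    then show ?thesis unfolding Cc_def by (rule someI_ex)
  qed
  have mi: "isp m" if "m \<in> ?S" for m using that cl partitions_isp unfolding clique_def by blast
  have adm: "admissible l (Cc m) (A m) \<and> m = move l (Cc m) (A m)" if "m \<in> ?S" for m
    using pvec_move[OF li mi[OF that] pv[OF that]] .
  have pair: "A m = A m' \<or> Cc m = Cc m'" if mm: "m \<in> ?S" "m' \<in> ?S" "m \<noteq> m'" for m m'
  proof -
    have pw: "\<forall>x\<in>s. \<forall>y\<in>s. x \<noteq> y \<longrightarrow> adj x y" using cl unfolding clique_def by blast
    have "m \<in> s" "m' \<in> s" using mm by auto
    then have "adj m m'" using pw[rule_format, of m m'] mm(3) by metis
    then obtain a' c' where "pvec m m' a' c'" using adj_iff[OF mi[OF mm(1)]] by blast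
    then show ?thesis using pvec_tri[OF pv[OF mm(1)] pv[OF mm(2)]] by blast
  qed
  show ?thesis
  proof (cases "\<exists>m\<in>?S. \<exists>m'\<in>?S. A m \<noteq> A m'")
    case True
    then obtain m m' where mm: "m \<in> ?S" "m' \<in> ?S" "A m \<noteq> A m'" by blast
    have cm: "Cc m = Cc m'" using pair[OF mm(1,2)] mm(3) by auto
    have allc: "Cc r = Cc m" if "r \<in> ?S" for r
    proof (rule ccontr)
      assume h: "Cc r \<noteq> Cc m"
      then have "r \<noteq> m" "r \<noteq> m'" using cm by auto
      then have "A r = A m" "A r = A m'" using pair[OF that mm(1)] pair[OF that mm(2)] h cm by auto
      then show False using mm(3) by simp
    qed
    have rem: "removable l (Cc m)" using adm[OF mm(1)] unfolding admissible_def by blast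
    have "s \<subseteq> star_max l (Cc m)"
    proof
      fix r assume r: "r \<in> s"
      show "r \<in> star_max l (Cc m)"
      proof (cases "r = l")
        case False
        then have rS: "r \<in> ?S" using r by simp
        then show ?thesis using adm[OF rS] allc[OF rS] unfolding star_max_def A_max_def by auto
      qed (simp add: star_max_def)
    qed
    moreover have "star_max l (Cc m) \<in> C n" using star_in_C[OF lp rem] .
    ultimately show ?thesis by blast
  next
    case False
    show ?thesis
    proof (cases "?S = {}")
      case True
      have "l \<noteq> []" using lp n unfolding partitions_def by auto
      then have rem: "removable l (length l)"
        using part_pos[OF li, of "length l"] part_pos[OF li, of "length l + 1"]
        unfolding removable_def by (simp add: Suc_leI)
      have "s \<subseteq> star_max l (length l)" using True l unfolding star_max_def by auto
      moreover have "star_max l (length l) \<in> C n" using star_in_C[OF lp rem] .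
      ultimately show ?thesis by blast
    next
      case ne: False
      then obtain m where m: "m \<in> ?S" by blast
      have all: "\<forall>m\<in>?S. \<forall>m'\<in>?S. A m = A m'" using False by blast
      have alla: "A r = A m" if "r \<in> ?S" for r using all m that by blast
      have ad: "addable l (A m)" using adm[OF m] unfolding admissible_def by blast
      have "s \<subseteq> top_max l (A m)"
      proof
        fix r assume r: "r \<in> s"
        show "r \<in> top_max l (A m)"
        proof (cases "r = l")
          case False
          then have rS: "r \<in> ?S" using r by simp
          then show ?thesis using adm[OF rS] alla[OF rS] unfolding top_max_def C_max_def by auto
        qed (simp add: top_max_def)
      qed
      moreover have "top_max l (A m) \<in> C n" using top_in_C[OF lp ad] .
      ultimately show ?thesis by blast
    qed
  qed
qed

lemma K_cover:
  assumes "n \<ge> 1"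
  shows "K n = cover_cx (C n)"
proof
  show "K n \<subseteq> cover_cx (C n)"
  proof
    fix s assume s: "s \<in> K n"
    then have "clique n s" "s \<noteq> {}" "finite s" unfolding K_def clique_def by auto
    then show "s \<in> cover_cx (C n)" using clique_covered[OF assms] unfolding cover_cx_def by blast
  qed
  show "cover_cx (C n) \<subseteq> K n"
  proof
    fix s assume "s \<in> cover_cx (C n)"
    then obtain f where "s \<noteq> {}" "finite s" "f \<in> C n" "s \<subseteq> f" unfolding cover_cx_def by blast
    then show "s \<in> K n" using C_clique[of f n] unfolding clique_def K_def by blast
  qed
qed

theorem proposition3p2:
  fixes n :: nat
  assumes "n \<ge> 1"
  shows "euler_char (K n) = euler_char (nerve (C n))"
  using K_cover[OF assms] euler_cover_nerve[OF finite_C finite_C_mem] by simp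


end
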